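(* Let $\mathbf w_1,\dots,\mathbf w_K\in\mathbb R^d$ ($K\ge2$) and $k\in[K]$ with $\mathbf w_k\notin\operatorname{conv}(\{\mathbf w_j\}_{j\in[K]\setminus\{k\}})$. Then the problems $$\min_{\mathbf h\in\mathbb S^{d-1}}\max_{k'\ne k}\langle\mathbf w_{k'}-\mathbf w_k,\mathbf h\rangle\quad\text{and}\quad\min_{\|\mathbf h\|_2\le1}\max_{k'\ne k}\langle\mathbf w_{k'}-\mathbf w_k,\mathbf h\rangle$$ are equivalent, i.e. they have the same optimal solutions.
   Context: $\mathbb S^{d-1}$ is the unit sphere in $\mathbb R^d$; $\operatorname{conv}$ denotes convex hull. *)

theory Defs
  imports "HOL-Analysis.Analysis"
begin

definition margin_obj :: "nat \<Rightarrow> (nat \<Rightarrow> 'a::euclidean_space) \<Rightarrow> nat \<Rightarrow> 'a \<Rightarrow> real" where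
  "margin_obj K w k h = Max ((\<lambda>k'. inner (w k' - w k) h) ` ({1..K} - {k}))"

definition argmin_set :: "('a \<Rightarrow> real) \<Rightarrow> 'a set \<Rightarrow> 'a set" where
  "argmin_set f S = {h \<in> S. \<forall>h'\<in>S. f h \<le> f h'}"

end

theory Submission
  imports Defs
begin

lemma mo_scale:
  assumes "finite I" "I \<noteq> {}" "c > 0"
  shows "Max ((\<lambda>j. inner (w j - w k) (c *\<^sub>R h)) ` I) = c * Max ((\<lambda>j. inner (w j - w k) h) ` I)"
proof -
  let ?A = "(\<lambda>j. inner (w j - w k) h) ` I"
  have fin: "finite ?A" "?A \<noteq> {}" using assms by auto
  obtain j0 where j0: "j0 \<in> I" "Max ?A = inner (w j0 - w k) h"
    using Max_in[OF fin] by auto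
  have le: "\<And>j. j \<in> I \<Longrightarrow> inner (w j - w k) h \<le> Max ?A"
    using fin by (intro Max_ge) auto
  show ?thesis
  proof (rule Max_eqI)
    show "finite ((\<lambda>j. inner (w j - w k) (c *\<^sub>R h)) ` I)" using assms by auto
    show "\<And>y. y \<in> (\<lambda>j. inner (w j - w k) (c *\<^sub>R h)) ` I \<Longrightarrow> y \<le> c * Max ?A"
      using le assms(3) by (auto intro: mult_left_mono)
    show "c * Max ?A \<in> (\<lambda>j. inner (w j - w k) (c *\<^sub>R h)) ` I"
      using j0 by (auto intro!: image_eqI[where x=j0])
  qed
qed

theorem mainTheorem13:
  fixes w :: "nat \<Rightarrow> 'a::euclidean_space" and K k :: nat
  assumes "K \<ge> 2" and "k \<in> {1..K}"
    and "w k \<notin> convex hull (w ` ({1..K} - {k}))"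
  shows "argmin_set (margin_obj K w k) (sphere 0 1) = argmin_set (margin_obj K w k) (cball 0 1)"
proof -
  let ?I = "{1..K} - {k}"
  let ?f = "margin_obj K w k"
  have finI: "finite ?I" by auto
  have neI: "?I \<noteq> {}"
  proof
    assume "?I = {}"
    hence "{1..K} \<subseteq> {k}" by auto
    hence "card {1..K} \<le> card {k}" by (intro card_mono) auto
    thus False using assms(1) by simp
  qed
  have scale: "?f (c *\<^sub>R h) = c * ?f h" if "c > 0" for c h
    unfolding margin_obj_def using mo_scale[OF finI neI that] by simp
  have neg: "?f h < 0" if "\<And>j. j \<in> ?I \<Longrightarrow> inner (w j - w k) h < 0" for h
  proof -
    have "Max ((\<lambda>j. inner (w j - w k) h) ` ?I) \<in> (\<lambda>j. inner (w j - w k) h) ` ?I"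
      using finI neI by (intro Max_in) auto
    then obtain j where "j \<in> ?I" "Max ((\<lambda>j. inner (w j - w k) h) ` ?I) = inner (w j - w k) h" by blast
    thus ?thesis unfolding margin_obj_def using that by metis
  qed
  have "convex (convex hull (w ` ?I))" by simp
  moreover have "closed (convex hull (w ` ?I))"
    using finI by (simp add: compact_imp_closed finite_imp_compact_convex_hull)
  ultimately obtain a b where ab: "inner a (w k) < b" "\<forall>x\<in>convex hull (w ` ?I). inner a x > b"
    using separating_hyperplane_closed_point[OF _ _ assms(3)] by blast
  have "inner (w j - w k) (- a) < 0" if "j \<in> ?I" for j
  proof -
    have "w j \<in> convex hull (w ` ?I)" using that by (intro hull_inc) auto
    hence "inner a (w j) > b" using ab by auto
    thus ?thesis using ab(1) by (simp add: inner_diff_right inner_commute)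
  qed
  hence f0: "?f (- a) < 0" by (rule neg)
  have fz: "?f 0 = 0" unfolding margin_obj_def using finI neI
    by (simp add: image_constant_conv)
  have a0: "a \<noteq> 0" using f0 fz by auto
  define h0 where "h0 = (1 / norm a) *\<^sub>R (- a)"
  have h0s: "h0 \<in> sphere 0 1" using a0 by (simp add: h0_def)
  have fh0: "?f h0 < 0" unfolding h0_def using scale[of "1 / norm a" "- a"] a0 f0
    by (simp add: divide_neg_pos)
  have red: "\<exists>h'\<in>sphere 0 1. ?f h' \<le> ?f h" if "h \<in> cball 0 1" for h
  proof (cases "?f h < 0")
    case True
    have hn: "h \<noteq> 0"
    proof
      assume "h = 0"
      hence "?f h = 0" unfolding margin_obj_def using finI neI
        by (simp add: image_constant_conv)
      thus False using True by simp
    qed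
    have n1: "norm h \<le> 1" "norm h > 0" using that hn by auto
    have "?f ((1 / norm h) *\<^sub>R h) = ?f h / norm h" using scale[of "1/norm h" h] n1 by simp
    also have "\<dots> \<le> ?f h" using True n1
      by (simp add: divide_le_eq mult_le_cancel_left_neg mult_le_cancel_left)
    finally show ?thesis using hn by (intro bexI[of _ "(1 / norm h) *\<^sub>R h"]) auto
  next
    case False
    thus ?thesis using h0s fh0 by (intro bexI[of _ h0]) auto
  qed
  show ?thesis
  proof
    show "argmin_set ?f (sphere 0 1) \<subseteq> argmin_set ?f (cball 0 1)"
    proof
      fix h assume h: "h \<in> argmin_set ?f (sphere 0 1)"
      have "?f h \<le> ?f h'" if hb': "h' \<in> cball 0 1" for h'
      proof -
        obtain h'' where "h'' \<in> sphere 0 1" "?f h'' \<le> ?f h'" using red[OF hb'] by blast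
        moreover have "\<forall>g\<in>sphere 0 1. ?f h \<le> ?f g" using h unfolding argmin_set_def by blast
        ultimately show ?thesis by (meson order_trans)
      qed
      thus "h \<in> argmin_set ?f (cball 0 1)" using h unfolding argmin_set_def by auto
    qed
  next
    show "argmin_set ?f (cball 0 1) \<subseteq> argmin_set ?f (sphere 0 1)"
    proof
      fix h assume h: "h \<in> argmin_set ?f (cball 0 1)"
      hence hb: "h \<in> cball 0 1" and hm: "\<And>h'. h' \<in> cball 0 1 \<Longrightarrow> ?f h \<le> ?f h'"
        unfolding argmin_set_def by auto
      have fneg: "?f h < 0" using hm[of h0] h0s fh0 by auto
      have hn: "h \<noteq> 0"
      proof
        assume "h = 0"
        hence "?f h = 0" unfolding margin_obj_def using finI neI
          by (simp add: image_constant_conv)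
        thus False using fneg by simp
      qed
      have "norm h = 1"
      proof (rule ccontr)
        assume "norm h \<noteq> 1"
        hence n1: "norm h < 1" "norm h > 0" using hb hn by auto
        have "?f ((1 / norm h) *\<^sub>R h) = ?f h / norm h" using scale[of "1/norm h" h] n1 by simp
        also have "\<dots> < ?f h" using fneg n1
          by (simp add: divide_less_eq)
        finally have "?f ((1 / norm h) *\<^sub>R h) < ?f h" .
        moreover have "(1 / norm h) *\<^sub>R h \<in> cball 0 1" using hn by simp
        ultimately show False using hm by fastforce
      qed
      thus "h \<in> argmin_set ?f (sphere 0 1)" using hm unfolding argmin_set_def by auto
    qed
  qed
qed

end
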